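(* For every $d\ge 2$, $\mu(Q_d)\le 2\,\mu(Q_{d-1})$.
   Context: $Q_d$ is the hypercube with vertex set $\{0,1\}^d$, two vertices adjacent iff their strings differ in exactly one bit. For a connected graph $G$ and $X\subseteq V(G)$, two vertices $x,y$ are $X$-visible if some shortest $x,y$-path has no internal vertex in $X$. $X$ is a mutual-visibility set if every two vertices of $X$ are $X$-visible; $\mu(G)$ is the maximum cardinality of a mutual-visibility set of $G$. *)

theory Defs
  imports Main
begin

definition is_walk :: "'a set \<Rightarrow> ('a \<Rightarrow> 'a \<Rightarrow> bool) \<Rightarrow> 'a list \<Rightarrow> bool" where
  "is_walk V E p \<longleftrightarrow> p \<noteq> [] \<and> set p \<subseteq> V \<and> (\<forall>i. Suc i < length p \<longrightarrow> E (p ! i) (p ! Suc i))"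

definition walk_between :: "'a set \<Rightarrow> ('a \<Rightarrow> 'a \<Rightarrow> bool) \<Rightarrow> 'a \<Rightarrow> 'a \<Rightarrow> 'a list \<Rightarrow> bool" where
  "walk_between V E x y p \<longleftrightarrow> is_walk V E p \<and> hd p = x \<and> last p = y"

definition gdist :: "'a set \<Rightarrow> ('a \<Rightarrow> 'a \<Rightarrow> bool) \<Rightarrow> 'a \<Rightarrow> 'a \<Rightarrow> nat" where
  "gdist V E x y = (LEAST n. \<exists>p. walk_between V E x y p \<and> length p = Suc n)"

definition shortest_path :: "'a set \<Rightarrow> ('a \<Rightarrow> 'a \<Rightarrow> bool) \<Rightarrow> 'a \<Rightarrow> 'a \<Rightarrow> 'a list \<Rightarrow> bool" where
  "shortest_path V E x y p \<longleftrightarrow> walk_between V E x y p \<and> length p = Suc (gdist V E x y)"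

definition visible :: "'a set \<Rightarrow> ('a \<Rightarrow> 'a \<Rightarrow> bool) \<Rightarrow> 'a set \<Rightarrow> 'a \<Rightarrow> 'a \<Rightarrow> bool" where
  "visible V E X x y \<longleftrightarrow> (\<exists>p. shortest_path V E x y p \<and> set (butlast (tl p)) \<inter> X = {})"

definition mutual_visibility_set :: "'a set \<Rightarrow> ('a \<Rightarrow> 'a \<Rightarrow> bool) \<Rightarrow> 'a set \<Rightarrow> bool" where
  "mutual_visibility_set V E X \<longleftrightarrow> X \<subseteq> V \<and> (\<forall>x\<in>X. \<forall>y\<in>X. visible V E X x y)"

definition mu :: "'a set \<Rightarrow> ('a \<Rightarrow> 'a \<Rightarrow> bool) \<Rightarrow> nat" where
  "mu V E = Max (card ` {X. mutual_visibility_set V E X})"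

definition hypercube_vertices :: "nat \<Rightarrow> bool list set" where
  "hypercube_vertices d = {xs. length xs = d}"

definition hypercube_adj :: "bool list \<Rightarrow> bool list \<Rightarrow> bool" where
  "hypercube_adj xs ys \<longleftrightarrow> length xs = length ys \<and> card {i. i < length xs \<and> xs ! i \<noteq> ys ! i} = 1"

definition mu_hypercube :: "nat \<Rightarrow> nat" where
  "mu_hypercube d = mu (hypercube_vertices d) hypercube_adj"

end

theory Submission
  imports Defs
begin

fun hm :: "bool list \<Rightarrow> bool list \<Rightarrow> nat" where
  "hm [] _ = 0"
| "hm _ [] = 0"
| "hm (a#as) (b#bs) = (if a = b then 0 else 1) + hm as bs"

lemma hm_filter: "hm xs ys = length (filter (\<lambda>(a,b). a \<noteq> b) (zip xs ys))"
  by (induction xs ys rule: hm.induct) auto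

lemma hm_card: "length xs = length ys \<Longrightarrow> hm xs ys = card {i. i < length xs \<and> xs ! i \<noteq> ys ! i}"
proof -
  assume l: "length xs = length ys"
  have "{i. i < length (zip xs ys) \<and> (\<lambda>(a,b). a \<noteq> b) (zip xs ys ! i)} = {i. i < length xs \<and> xs ! i \<noteq> ys ! i}"
    using l by (auto simp: nth_zip)
  then show ?thesis unfolding hm_filter length_filter_conv_card by simp
qed

lemma adj_iff: "hypercube_adj xs ys \<longleftrightarrow> length xs = length ys \<and> hm xs ys = 1"
  unfolding hypercube_adj_def using hm_card by auto

lemma hm_self[simp]: "hm x x = 0"
  by (induction x) auto

lemma hm_tri: "length x = length y \<Longrightarrow> length y = length z \<Longrightarrow> hm x z \<le> hm x y + hm y z"
proof (induction x y arbitrary: z rule: hm.induct)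
  case (3 a as b bs)
  then obtain c cs where "z = c # cs" by (cases z) auto
  with 3 have "hm as cs \<le> hm as bs + hm bs cs" by auto
  then show ?case unfolding \<open>z = c # cs\<close> by (cases a; cases b; cases c) auto
qed auto

lemma walk_Cons: "is_walk V E (x # p) \<longleftrightarrow> x \<in> V \<and> (p = [] \<or> (E x (hd p) \<and> is_walk V E p))"
proof
  assume a: "is_walk V E (x # p)"
  show "x \<in> V \<and> (p = [] \<or> (E x (hd p) \<and> is_walk V E p))"
  proof (cases p)
    case Nil then show ?thesis using a by (auto simp: is_walk_def)
  next
    case (Cons y q)
    have "E x y" using a Cons by (auto simp: is_walk_def)
    moreover have "\<forall>i. Suc i < length p \<longrightarrow> E (p ! i) (p ! Suc i)"
    proof (intro allI impI)
      fix i assume "Suc i < length p"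
      then have "Suc (Suc i) < length (x#p)" by simp
      then show "E (p ! i) (p ! Suc i)" using a unfolding is_walk_def by (metis nth_Cons_Suc)
    qed
    ultimately show ?thesis using a Cons by (auto simp: is_walk_def)
  qed
next
  assume a: "x \<in> V \<and> (p = [] \<or> (E x (hd p) \<and> is_walk V E p))"
  show "is_walk V E (x # p)"
  proof (cases p)
    case Nil then show ?thesis using a by (auto simp: is_walk_def)
  next
    case (Cons y q)
    have "\<forall>i. Suc i < length (x#p) \<longrightarrow> E ((x#p) ! i) ((x#p) ! Suc i)"
    proof (intro allI impI)
      fix i assume "Suc i < length (x#p)"
      then show "E ((x#p) ! i) ((x#p) ! Suc i)"
        using a Cons by (cases i) (auto simp: is_walk_def)
    qed
    then show ?thesis using a Cons by (auto simp: is_walk_def)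
  qed
qed

lemma walk_single[simp]: "is_walk V E [x] \<longleftrightarrow> x \<in> V"
  by (simp add: walk_Cons)

lemma walk_split: "is_walk V E (a @ v # b) \<Longrightarrow> is_walk V E (a @ [v]) \<and> is_walk V E (v # b)"
proof (induction a)
  case Nil then show ?case by (simp add: walk_Cons)
next
  case (Cons x a)
  then have "x \<in> V" "E x (hd (a @ v # b))" "is_walk V E (a @ v # b)" by (auto simp: walk_Cons)
  with Cons.IH show ?case by (cases a) (auto simp: walk_Cons)
qed

abbreviation "HV \<equiv> hypercube_vertices"

lemma walk_bound: "is_walk (HV n) hypercube_adj p \<Longrightarrow> hm (hd p) (last p) \<le> length p - 1"
proof (induction p)
  case Nil then show ?case by (simp add: is_walk_def)
next
  case (Cons x p)
  show ?case
  proof (cases p)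
    case Nil then show ?thesis by simp
  next
    case (Cons y q)
    have w: "is_walk (HV n) hypercube_adj p" "hypercube_adj x y" "x \<in> HV n"
      using Cons.prems Cons by (auto simp: walk_Cons)
    have "last p \<in> set p" using Cons by simp
    then have "last p \<in> HV n" using w(1) by (auto simp: is_walk_def)
    then have "hm x (last p) \<le> hm x y + hm y (last p)"
      using w by (intro hm_tri) (auto simp: adj_iff hypercube_vertices_def)
    also have "\<dots> \<le> 1 + (length p - 1)" using Cons.IH[OF w(1)] w Cons by (auto simp: adj_iff)
    finally show ?thesis using Cons by simp
  qed
qed

lemma walk_exists: "length x = length y \<Longrightarrow>
  \<exists>p. walk_between (HV (length x)) hypercube_adj x y p \<and> length p = Suc (hm x y)"
proof (induction x y rule: hm.induct)
  case (1 uu)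
  then show ?case by (intro exI[of _ "[[]]"]) (auto simp: walk_between_def hypercube_vertices_def)
next
  case (2 v va)
  then show ?case by simp
next
  case (3 a as b bs)
  then obtain p where p: "walk_between (HV (length as)) hypercube_adj as bs p" "length p = Suc (hm as bs)"
    by auto
  have mw: "is_walk (HV (Suc (length as))) hypercube_adj (map (Cons c) p)" for c
  proof -
    have "is_walk (HV (length as)) hypercube_adj q \<Longrightarrow>
          is_walk (HV (Suc (length as))) hypercube_adj (map (Cons c) q)" for q
    proof (induction q)
      case (Cons u q)
      then show ?case
        by (cases q) (auto simp: walk_Cons hypercube_vertices_def adj_iff)
    qed (simp add: is_walk_def)
    then show ?thesis using p by (auto simp: walk_between_def)
  qed
  have pne: "p \<noteq> []" using p by (auto simp: walk_between_def is_walk_def)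
  show ?case
  proof (cases "a = b")
    case True
    then show ?thesis using p mw[of a] pne
      by (intro exI[of _ "map (Cons a) p"]) (auto simp: walk_between_def hd_map last_map)
  next
    case False
    have "hd (map (Cons b) p) = b # as" using p pne by (auto simp: walk_between_def hd_map)
    then have "is_walk (HV (Suc (length as))) hypercube_adj ((a#as) # map (Cons b) p)"
      using mw[of b] False 3 pne by (subst walk_Cons) (auto simp: hypercube_vertices_def adj_iff)
    then show ?thesis using p pne False
      by (intro exI[of _ "(a#as) # map (Cons b) p"]) (auto simp: walk_between_def last_map)
  qed
qed

lemma gdist_eq: "x \<in> HV n \<Longrightarrow> y \<in> HV n \<Longrightarrow> gdist (HV n) hypercube_adj x y = hm x y"
  unfolding gdist_def
proof (rule Least_equality)
  assume "x \<in> HV n" "y \<in> HV n"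
  then show "\<exists>p. walk_between (HV n) hypercube_adj x y p \<and> length p = Suc (hm x y)"
    using walk_exists[of x y] by (auto simp: hypercube_vertices_def)
next
  fix m assume "\<exists>p. walk_between (HV n) hypercube_adj x y p \<and> length p = Suc m"
  then obtain p where "walk_between (HV n) hypercube_adj x y p" "length p = Suc m" by auto
  then show "hm x y \<le> m" using walk_bound[of n p] by (auto simp: walk_between_def)
qed

lemma first_bit:
  assumes "length x = Suc n" "length v = Suc n" "length y = Suc n" "hd x = hd y"
    "hm x v + hm v y \<le> hm x y"
  shows "hd v = hd x"
proof -
  obtain a xs where x: "x = a # xs" using assms by (cases x) auto
  obtain c vs where v: "v = c # vs" using assms by (cases v) auto
  obtain b ys where y: "y = b # ys" using assms by (cases y) auto
  have "hm xs ys \<le> hm xs vs + hm vs ys" using assms x v y by (intro hm_tri) auto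
  then show ?thesis using assms x v y by (auto split: if_splits)
qed

lemma shortest_hd:
  assumes sp: "shortest_path (HV (Suc n)) hypercube_adj x y p" and h: "hd x = hd y"
    and u: "u \<in> set p"
  shows "hd u = hd x"
proof -
  obtain a b where ab: "p = a @ u # b" using u split_list by metis
  have wb: "walk_between (HV (Suc n)) hypercube_adj x y p" and lp: "length p = Suc (gdist (HV (Suc n)) hypercube_adj x y)"
    using sp by (auto simp: shortest_path_def)
  have w: "is_walk (HV (Suc n)) hypercube_adj p" "hd p = x" "last p = y" using wb by (auto simp: walk_between_def)
  have inV: "set p \<subseteq> HV (Suc n)" using w by (auto simp: is_walk_def)
  have xV: "x \<in> HV (Suc n)" using w inV by (metis hd_in_set is_walk_def subsetD)
  have yV: "y \<in> HV (Suc n)" using w inV by (metis last_in_set is_walk_def subsetD)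
  have uV: "u \<in> HV (Suc n)" using inV u by auto
  have ws: "is_walk (HV (Suc n)) hypercube_adj (a @ [u])" "is_walk (HV (Suc n)) hypercube_adj (u # b)"
    using walk_split[of _ _ a u b] w ab by auto
  have "hd (a @ [u]) = x" using w ab by (cases a) auto
  then have 1: "hm x u \<le> length a" using walk_bound[OF ws(1)] by simp
  have "last (u # b) = y" using w ab by (cases b) auto
  then have 2: "hm u y \<le> length b" using walk_bound[OF ws(2)] by simp
  have "length p = Suc (hm x y)" using lp gdist_eq[OF xV yV] by simp
  then have "hm x u + hm u y \<le> hm x y" using 1 2 ab by simp
  then show ?thesis using first_bit[of x n u y] xV yV uV h by (auto simp: hypercube_vertices_def)
qed

lemma proj_walk:
  "is_walk (HV (Suc n)) hypercube_adj p \<Longrightarrow> (\<forall>u\<in>set p. hd u = c) \<Longrightarrow>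
   is_walk (HV n) hypercube_adj (map tl p)"
proof (induction p)
  case Nil then show ?case by (simp add: is_walk_def)
next
  case (Cons x p)
  then have x: "x \<in> HV (Suc n)" by (simp add: walk_Cons)
  show ?case
  proof (cases p)
    case Nil then show ?thesis using x by (simp add: hypercube_vertices_def)
  next
    case (Cons y q)
    have w: "is_walk (HV (Suc n)) hypercube_adj p" "hypercube_adj x y"
      using Cons.prems Cons by (auto simp: walk_Cons)
    obtain x' where x': "x = c # x'" using x Cons.prems by (cases x) (auto simp: hypercube_vertices_def)
    obtain y' where y': "y = c # y'" using w Cons.prems Cons x' by (cases y) (auto simp: adj_iff)
    have "hypercube_adj (tl x) (tl y)" using w x' y' by (auto simp: adj_iff)
    then show ?thesis using Cons.IH Cons.prems Cons x w
      by (subst list.map, subst walk_Cons) (auto simp: hypercube_vertices_def)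
  qed
qed

lemma proj_mv:
  assumes mv: "mutual_visibility_set (HV (Suc n)) hypercube_adj X"
  shows "mutual_visibility_set (HV n) hypercube_adj (tl ` {x \<in> X. hd x = c})"
  unfolding mutual_visibility_set_def
proof (intro conjI ballI)
  have XV: "X \<subseteq> HV (Suc n)" using mv by (simp add: mutual_visibility_set_def)
  then show "tl ` {x \<in> X. hd x = c} \<subseteq> HV n" by (auto simp: hypercube_vertices_def)
  fix x' y' assume "x' \<in> tl ` {x \<in> X. hd x = c}" "y' \<in> tl ` {x \<in> X. hd x = c}"
  then obtain x y where xy: "x \<in> X" "y \<in> X" "hd x = c" "hd y = c" "x' = tl x" "y' = tl y" by auto
  obtain p where p: "shortest_path (HV (Suc n)) hypercube_adj x y p" "set (butlast (tl p)) \<inter> X = {}"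
    using mv xy unfolding mutual_visibility_set_def visible_def by blast
  have hdp: "\<forall>u\<in>set p. hd u = c" using shortest_hd[OF p(1)] xy by auto
  have wb: "walk_between (HV (Suc n)) hypercube_adj x y p" "length p = Suc (gdist (HV (Suc n)) hypercube_adj x y)"
    using p by (auto simp: shortest_path_def)
  have xV: "x \<in> HV (Suc n)" "y \<in> HV (Suc n)" using XV xy by auto
  obtain xs ys where xs: "x = c # xs" "y = c # ys" using xV xy
    by (cases x; cases y) (auto simp: hypercube_vertices_def)
  have pne: "p \<noteq> []" using wb by (auto simp: walk_between_def is_walk_def)
  have "walk_between (HV n) hypercube_adj x' y' (map tl p)"
    using proj_walk[OF _ hdp] wb pne xy by (auto simp: walk_between_def hd_map last_map)
  moreover have "length (map tl p) = Suc (gdist (HV n) hypercube_adj x' y')"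
    using wb gdist_eq[OF xV] gdist_eq[of x' n y'] xV xs xy by (auto simp: hypercube_vertices_def)
  moreover have "set (butlast (tl (map tl p))) \<inter> tl ` {x \<in> X. hd x = c} = {}"
  proof (rule ccontr)
    assume "\<not> ?thesis"
    then obtain u w where uw: "u \<in> set (butlast (tl p))" "w \<in> X" "hd w = c" "tl u = tl w"
      by (auto simp: map_butlast[symmetric] map_tl[symmetric])
    have up: "u \<in> set p" using uw(1) by (cases p) (auto dest: in_set_butlastD)
    then have "u \<in> HV (Suc n)" using wb by (auto simp: walk_between_def is_walk_def)
    then have e1: "u = hd u # tl u" by (cases u) (auto simp: hypercube_vertices_def)
    have e2: "w = hd w # tl w" using uw XV by (cases w) (auto simp: hypercube_vertices_def)
    have e3: "hd u = c" using hdp up by auto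
    have "u = w" using e1 e2 e3 uw(3,4) by simp
    then show False using uw p(2) by auto
  qed
  ultimately show "visible (HV n) hypercube_adj (tl ` {x \<in> X. hd x = c}) x' y'"
    unfolding visible_def shortest_path_def by blast
qed

lemma finite_HV: "finite (HV n)"
proof -
  have "HV n = {xs. set xs \<subseteq> UNIV \<and> length xs = n}" by (auto simp: hypercube_vertices_def)
  then show ?thesis using finite_lists_length_eq[of "UNIV :: bool set" n] by simp
qed

lemma fin_mv: "finite (card ` {X. mutual_visibility_set (HV n) hypercube_adj X})"
proof -
  have "{X. mutual_visibility_set (HV n) hypercube_adj X} \<subseteq> Pow (HV n)"
    by (auto simp: mutual_visibility_set_def)
  then show ?thesis using finite_HV by (meson finite_Pow_iff finite_imageI finite_subset)
qed

lemma mu_ge: "mutual_visibility_set (HV n) hypercube_adj X \<Longrightarrow> card X \<le> mu_hypercube n"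
  unfolding mu_hypercube_def mu_def using fin_mv by (intro Max_ge) auto

lemma mu_att: "\<exists>X. mutual_visibility_set (HV n) hypercube_adj X \<and> card X = mu_hypercube n"
proof -
  have "mutual_visibility_set (HV n) hypercube_adj {}" by (simp add: mutual_visibility_set_def)
  then have "card ` {X. mutual_visibility_set (HV n) hypercube_adj X} \<noteq> {}" by auto
  then have "mu_hypercube n \<in> card ` {X. mutual_visibility_set (HV n) hypercube_adj X}"
    unfolding mu_hypercube_def mu_def using fin_mv Max_in by blast
  then show ?thesis by auto
qed

theorem corollary3p2:
  fixes d :: nat
  assumes "d \<ge> 2"
  shows "mu_hypercube d \<le> 2 * mu_hypercube (d - 1)"
proof -
  obtain n where d: "d = Suc n" using assms by (cases d) auto
  obtain X where X: "mutual_visibility_set (HV (Suc n)) hypercube_adj X" "card X = mu_hypercube d"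
    using mu_att d by blast
  have XV: "X \<subseteq> HV (Suc n)" using X by (simp add: mutual_visibility_set_def)
  have fX: "finite X" using XV finite_HV finite_subset by blast
  have inj: "inj_on tl {x \<in> X. hd x = c}" for c
  proof (rule inj_onI)
    fix u w assume "u \<in> {x \<in> X. hd x = c}" "w \<in> {x \<in> X. hd x = c}" "tl u = tl w"
    moreover have "u = hd u # tl u" using calculation XV
      by (cases u) (auto simp: hypercube_vertices_def)
    moreover have "w = hd w # tl w" using calculation XV
      by (cases w) (auto simp: hypercube_vertices_def)
    ultimately show "u = w" by (metis (mono_tags, lifting) mem_Collect_eq)
  qed
  have b: "card {x \<in> X. hd x = c} \<le> mu_hypercube n" for c
    using mu_ge[OF proj_mv[OF X(1), of c]] card_image[OF inj[of c]] by simp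
  have "X = {x \<in> X. hd x = True} \<union> {x \<in> X. hd x = False}" by auto
  then have "card X \<le> card {x \<in> X. hd x = True} + card {x \<in> X. hd x = False}"
    by (metis card_Un_le)
  then show ?thesis using b[of True] b[of False] X d by simp
qed

end
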